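(* Let $p\ge3$ be prime and $A,\iota,\chi,\gamma_k$ as in the context. Then \[\chi\circ\gamma_{p-1}+\gamma_{p-1}\circ\chi+\sum_{k=2}^{p-2}\gamma_k\circ\gamma_{p-k}=\iota^{p-1}.\]
   Context: Let $p\ge3$ be prime, $l:=2(p-1)$; $\omega(i):=r+1$ if $i=jl+r$ with $0\le r\le p-2$, and $\omega(i):=l-r$ if $p-1\le r\le l-1$. Let $P_1,\dots,P_{p-1}$ and $e_k$ (identity of $P_k$), $e_{1,1},e_{p-1,p-1},e_{k+1,k}:P_k\to P_{k+1},e_{k,k+1}:P_{k+1}\to P_k$ be as follows: with $\Gamma=\prod_{\lambda\vdash p}\mathbb{Z}_{(p)}^{n_\lambda\times n_\lambda}$ ($n_\lambda$ = Specht module rank), hooks $\lambda^k=(p-k+1,1^{k-1})$, $n^k_{\rm b}=\binom{p-2}{k-1}$, $n^k_{\rm c}=\binom{p-2}{k-2}$, $\Lambda=\{\rho\in\Gamma:\rho^{\lambda^k}_{\rm bb}\equiv\rho^{\lambda^{k+1}}_{\rm cc}\bmod p,\ \rho^{\lambda^k}_{\rm bc}\equiv0\bmod p\}$ (blocks ${\rm cc}$ upper-left $n^k_{\rm c}\times n^k_{\rm c}$, ${\rm bc}$ upper-right, ${\rm bb}$ lower-right), $\mathbb{F}_p\mathfrak{S}_p$ identified with $\Lambda/p\Lambda$ via the known isomorphism $\mathbb{Z}_{(p)}\mathfrak{S}_p\cong\Lambda$, matrix units $\eta_{\lambda,i,j}$, $\tilde e_k=\eta_{\lambda^k,n^k_{\rm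 c}+1,n^k_{\rm c}+1}+\eta_{\lambda^{k+1},1,1}$, $P_k=\tilde e_k\Lambda/p\tilde e_k\Lambda$, maps induced by left multiplication with $p\eta_{\lambda^1,1,1}$, $p\eta_{\lambda^p,1,1}$, $\eta_{\lambda^{k+1},n^{k+1}_{\rm c}+1,1}$, $p\eta_{\lambda^{k+1},1,n^{k+1}_{\rm c}+1}$. Resolution $\mathcal P$: $\mathcal P_i=P_{\omega(i)}$ ($i\ge0$), $0$ ($i<0$), $d_i=e_{\omega(i-1),\omega(i)}$. $\operatorname{Hom}^z(C,C')=\prod_i\operatorname{Hom}(C_{i+z},C'_i)$, composition componentwise; $\lfloor g\rfloor^y_x$ ($g:C_x\to C'_y$) has $g$ as its $y$-th component, zero elsewhere. $A=\bigoplus_z\operatorname{Hom}^z_{\mathbb{F}_p\mathfrak{S}_p}(\mathcal P,\mathcal P)$ (graded algebra under composition). $\iota:=\sum_{i\ge0}\lfloor e_{\omega(i)}\rfloor^i_{i+l}$; $\chi:=\sum_{i\ge0}(\lfloor e_1\rfloor^{il}_{il+l-1}+\sum_{k=1}^{p-2}\lfloor e_{k+1,k}\rfloor^{il+k}_{il+l-1+k}+\lfloor e_{p-1}\rfloor^{il+p-1}_{il+l-1+p-1}+\sum_{k=1}^{p-2}\lfloor e_{p-k-1,p-k}\rfloor^{il+p-1+k}_{il+l-1+p-1+k})$; $\gamma_k:=\sum_{i\ge0}(\lfloor e_k\rfloor^{k-1+li}_{k(l-1)+li}+\lfloor e_{p-k}\rfloor^{k-1+(p-1)+li}_{k(l-1)+(p-1)+li})$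 for $k\in[2,p-1]$. *)

theory Defs
  imports Complex_Main "HOL-Computational_Algebra.Primes"
begin

definition is_partition :: "nat \<Rightarrow> nat list \<Rightarrow> bool" where
  "is_partition n lam \<longleftrightarrow> sum_list lam = n \<and> (\<forall>x\<in>set lam. 0 < x) \<and> sorted_wrt (\<ge>) lam"

(* Young diagram, 0-based (row, column) *)
definition cells :: "nat list \<Rightarrow> (nat \<times> nat) set" where
  "cells lam = {(r, c). r < length lam \<and> c < lam ! r}"

definition syt :: "nat list \<Rightarrow> (nat \<times> nat \<Rightarrow> nat) set" where
  "syt lam = {T. (\<forall>x. x \<notin> cells lam \<longrightarrow> T x = 0)
     \<and> bij_betw T (cells lam) {1..sum_list lam}
     \<and> (\<forall>r c. (r, Suc c) \<in> cells lam \<longrightarrow> T (r, c) < T (r, Suc c))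
     \<and> (\<forall>r c. (Suc r, c) \<in> cells lam \<longrightarrow> T (r, c) < T (Suc r, c))}"

(* rank n_lambda of the Specht module = number of standard Young tableaux *)
definition nlam :: "nat list \<Rightarrow> nat" where
  "nlam lam = card (syt lam)"

definition hook :: "nat \<Rightarrow> nat \<Rightarrow> nat list" where
  "hook p k = (p - k + 1) # replicate (k - 1) 1"

definition nb :: "nat \<Rightarrow> nat \<Rightarrow> nat" where
  "nb p k = (p - 2) choose (k - 1)"

definition nc :: "nat \<Rightarrow> nat \<Rightarrow> nat" where
  "nc p k = (if 2 \<le> k then (p - 2) choose (k - 2) else 0)"

type_synonym elt = "nat list \<Rightarrow> nat \<Rightarrow> nat \<Rightarrow> rat"

(* membership in Z_(p) *)
definition zp :: "nat \<Rightarrow> rat \<Rightarrow> bool" where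
  "zp p q \<longleftrightarrow> \<not> int p dvd snd (quotient_of q)"

definition congp :: "nat \<Rightarrow> rat \<Rightarrow> rat \<Rightarrow> bool" where
  "congp p x y \<longleftrightarrow> zp p ((x - y) / of_nat p)"

(* Gamma = prod_{lambda |- p} Z_(p)^{n_lambda x n_lambda}, matrices indexed 1..n_lambda *)
definition Gam :: "nat \<Rightarrow> elt set" where
  "Gam p = {rho. (\<forall>lam i j. rho lam i j \<noteq> 0 \<longrightarrow>
                      is_partition p lam \<and> i \<in> {1..nlam lam} \<and> j \<in> {1..nlam lam})
               \<and> (\<forall>lam i j. zp p (rho lam i j))}"

definition mmul :: "elt \<Rightarrow> elt \<Rightarrow> elt" where
  "mmul a b = (\<lambda>lam i j. \<Sum>t = 1..nlam lam. a lam i t * b lam t j)"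

definition madd :: "elt \<Rightarrow> elt \<Rightarrow> elt" where
  "madd a b = (\<lambda>lam i j. a lam i j + b lam i j)"

definition msub :: "elt \<Rightarrow> elt \<Rightarrow> elt" where
  "msub a b = (\<lambda>lam i j. a lam i j - b lam i j)"

definition msc :: "rat \<Rightarrow> elt \<Rightarrow> elt" where
  "msc c a = (\<lambda>lam i j. c * a lam i j)"

definition eta :: "nat list \<Rightarrow> nat \<Rightarrow> nat \<Rightarrow> elt" where
  "eta lam i j = (\<lambda>lam' i' j'. if lam' = lam \<and> i' = i \<and> j' = j then 1 else 0)"

(* Lambda: blocks cc = upper-left n_c x n_c, bc = upper-right (rows 1..n_c, columns n_c+1..),
   bb = lower-right *)
definition Lam :: "nat \<Rightarrow> elt set" where
  "Lam p = {rho \<in> Gam p. \<forall>k \<in> {1..p-1}.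
     (\<forall>a \<in> {1..nb p k}. \<forall>b \<in> {1..nb p k}.
        congp p (rho (hook p k) (nc p k + a) (nc p k + b)) (rho (hook p (Suc k)) a b))
   \<and> (\<forall>a \<in> {1..nc p k}. \<forall>b \<in> {1..nb p k}. congp p (rho (hook p k) a (nc p k + b)) 0)}"

definition etl :: "nat \<Rightarrow> nat \<Rightarrow> elt" where
  "etl p k = madd (eta (hook p k) (nc p k + 1) (nc p k + 1)) (eta (hook p (Suc k)) 1 1)"

definition eL :: "nat \<Rightarrow> nat \<Rightarrow> elt set" where
  "eL p k = {mmul (etl p k) rho | rho. rho \<in> Lam p}"

definition pEL :: "nat \<Rightarrow> nat \<Rightarrow> elt set" where
  "pEL p k = {msc (of_nat p) x | x. x \<in> eL p k}"

definition Pmod :: "nat \<Rightarrow> nat \<Rightarrow> elt set set" where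
  "Pmod p k = eL p k // {(x, y). x \<in> eL p k \<and> y \<in> eL p k \<and> msub x y \<in> pEL p k}"

definition ind :: "nat \<Rightarrow> nat \<Rightarrow> elt \<Rightarrow> elt set \<Rightarrow> elt set" where
  "ind p k' a X = {y \<in> eL p k'. \<exists>x \<in> X. msub y (mmul a x) \<in> pEL p k'}"

definition zeroc :: "nat \<Rightarrow> nat \<Rightarrow> elt set" where
  "zeroc p k = {y \<in> eL p k. y \<in> pEL p k}"

definition addc :: "nat \<Rightarrow> nat \<Rightarrow> elt set \<Rightarrow> elt set \<Rightarrow> elt set" where
  "addc p k X Y = {z \<in> eL p k. \<exists>x \<in> X. \<exists>y \<in> Y. msub z (madd x y) \<in> pEL p k}"

definition e_up :: "nat \<Rightarrow> nat \<Rightarrow> elt set \<Rightarrow> elt set" where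
  "e_up p k = ind p (Suc k) (eta (hook p (Suc k)) (nc p (Suc k) + 1) 1)"

definition e_down :: "nat \<Rightarrow> nat \<Rightarrow> elt set \<Rightarrow> elt set" where
  "e_down p k = ind p k (msc (of_nat p) (eta (hook p (Suc k)) 1 (nc p (Suc k) + 1)))"

definition ll :: "nat \<Rightarrow> nat" where
  "ll p = 2 * (p - 1)"

definition omega :: "nat \<Rightarrow> nat \<Rightarrow> nat" where
  "omega p i = (let r = i mod ll p in if r \<le> p - 2 then r + 1 else ll p - r)"

(* a homogeneous element of Hom^z(P,P): its i-th component (i \<ge> 0) is a map
   P_{omega(i+z)} \<rightarrow> P_{omega(i)}; components with i < 0 are zero maps into 0 *)
type_synonym gmap = "nat \<Rightarrow> elt set \<Rightarrow> elt set"

definition gcomp :: "gmap \<Rightarrow> nat \<Rightarrow> gmap \<Rightarrow> gmap" where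
  "gcomp f zf g = (\<lambda>i. f i \<circ> g (i + zf))"

definition gadd :: "nat \<Rightarrow> gmap \<Rightarrow> gmap \<Rightarrow> gmap" where
  "gadd p f g = (\<lambda>i X. addc p (omega p i) (f i X) (g i X))"

definition gzero :: "nat \<Rightarrow> gmap" where
  "gzero p = (\<lambda>i X. zeroc p (omega p i))"

(* iota = sum_i floor(e_{omega(i)})^i_{i+l}; degree l *)
definition iota :: "nat \<Rightarrow> gmap" where
  "iota p = (\<lambda>i. id)"

fun iota_pow :: "nat \<Rightarrow> nat \<Rightarrow> gmap" where
  "iota_pow p 0 = (\<lambda>i. id)"
| "iota_pow p (Suc n) = gcomp (iota p) (ll p) (iota_pow p n)"

(* chi; degree l-1.  Component il+r (0 \<le> r < l):
   r = 0: e_1;  r = k \<in> [1,p-2]: e_{k+1,k};  r = p-1: e_{p-1};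
   r = p-1+k, k \<in> [1,p-2]: e_{p-k-1,p-k} *)
definition chi :: "nat \<Rightarrow> gmap" where
  "chi p = (\<lambda>j. let r = j mod ll p in
     if r = 0 then id
     else if r \<le> p - 2 then e_up p r
     else if r = p - 1 then id
     else e_down p (p - (r - (p - 1)) - 1))"

definition gamma :: "nat \<Rightarrow> nat \<Rightarrow> gmap" where
  "gamma p k = (\<lambda>j.
     if \<exists>i. j = k - 1 + ll p * i then id
     else if \<exists>i. j = k - 1 + (p - 1) + ll p * i then id
     else (\<lambda>X. zeroc p (omega p j)))"

definition deg_chi :: "nat \<Rightarrow> nat" where
  "deg_chi p = ll p - 1"

definition deg_gamma :: "nat \<Rightarrow> nat \<Rightarrow> nat" where
  "deg_gamma p k = k * (ll p - 1) - (k - 1)"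

end

theory Submission
  imports Defs
begin

section \<open>Z_(p)\<close>

lemma zp_iff:
  assumes "prime p"
  shows "zp p q \<longleftrightarrow> (\<exists>a b. b \<noteq> 0 \<and> \<not> int p dvd b \<and> q = of_int a / of_int b)"
proof
  assume "zp p q"
  obtain n d where nd: "quotient_of q = (n, d)" by (cases "quotient_of q")
  have "d > 0" using nd quotient_of_denom_pos by blast
  moreover have "q = of_int n / of_int d" using nd quotient_of_div by blast
  moreover have "\<not> int p dvd d" using \<open>zp p q\<close> nd unfolding zp_def by simp
  ultimately show "\<exists>a b. b \<noteq> 0 \<and> \<not> int p dvd b \<and> q = of_int a / of_int b"
    by (intro exI[of _ n] exI[of _ d]) auto
next
  assume "\<exists>a b. b \<noteq> 0 \<and> \<not> int p dvd b \<and> q = of_int a / of_int b"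
  then obtain a b where ab: "b \<noteq> 0" "\<not> int p dvd b" "q = of_int a / of_int b" by blast
  obtain n d where nd: "quotient_of q = (n, d)" by (cases "quotient_of q")
  have d0: "d > 0" using nd quotient_of_denom_pos by blast
  have q2: "q = of_int n / of_int d" using nd quotient_of_div by blast
  have cop: "coprime n d" using nd quotient_of_coprime by blast
  have "of_int a * of_int d = (of_int n * of_int b :: rat)"
    using ab(1,3) q2 d0 by (simp add: field_simps)
  hence "a * d = n * b" by (metis of_int_eq_iff of_int_mult)
  hence "d dvd n * b" by (metis dvd_triv_right)
  hence "d dvd b" using cop by (metis coprime_commute coprime_dvd_mult_right_iff)
  hence "\<not> int p dvd d" using ab(2) dvd_trans by blast
  thus "zp p q" unfolding zp_def using nd by simp
qed

lemma zp_of_int: assumes "prime p" shows "zp p (of_int a)"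
proof -
  have "p > 1" using assms prime_gt_1_nat by blast
  thus ?thesis unfolding zp_def by simp
qed

lemma zp_0: "prime p \<Longrightarrow> zp p 0"
  using zp_of_int[of p 0] by simp

lemma zp_add:
  assumes "prime p" "zp p x" "zp p y" shows "zp p (x + y)"
proof -
  obtain a b where ab: "b \<noteq> 0" "\<not> int p dvd b" "x = of_int a / of_int b" using assms zp_iff by blast
  obtain c d where cd: "d \<noteq> 0" "\<not> int p dvd d" "y = of_int c / of_int d" using assms zp_iff by blast
  have pr: "prime (int p)" using assms(1) by simp
  have "\<not> int p dvd b * d" using ab cd pr prime_dvd_mult_iff by blast
  moreover have "x + y = of_int (a * d + c * b) / of_int (b * d)"
    using ab cd by (simp add: field_simps)
  ultimately show ?thesis using zp_iff[OF assms(1)] ab cd by (metis mult_eq_0_iff)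
qed

lemma zp_mult:
  assumes "prime p" "zp p x" "zp p y" shows "zp p (x * y)"
proof -
  obtain a b where ab: "b \<noteq> 0" "\<not> int p dvd b" "x = of_int a / of_int b" using assms zp_iff by blast
  obtain c d where cd: "d \<noteq> 0" "\<not> int p dvd d" "y = of_int c / of_int d" using assms zp_iff by blast
  have pr: "prime (int p)" using assms(1) by simp
  have "\<not> int p dvd b * d" using ab cd pr prime_dvd_mult_iff by blast
  moreover have "x * y = of_int (a * c) / of_int (b * d)"
    using ab cd by (simp add: field_simps)
  ultimately show ?thesis using zp_iff[OF assms(1)] ab cd by (metis mult_eq_0_iff)
qed

lemma zp_uminus:
  assumes "prime p" "zp p x" shows "zp p (- x)"
proof -
  have "- x = of_int (-1) * x" by simp
  thus ?thesis using zp_mult[OF assms(1) zp_of_int[OF assms(1), of "-1"] assms(2)] by simp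
qed

lemma zp_diff:
  assumes "prime p" "zp p x" "zp p y" shows "zp p (x - y)"
  using zp_add[OF assms(1,2) zp_uminus[OF assms(1,3)]] by simp

lemma zp_sum:
  assumes "prime p" "\<And>t. t \<in> A \<Longrightarrow> zp p (f t)" shows "zp p (sum f A)"
  using assms(2)
proof (induction A rule: infinite_finite_induct)
  case (infinite A) then show ?case by (simp add: zp_0 assms(1))
next
  case empty then show ?case by (simp add: zp_0 assms(1))
next
  case (insert x F) then show ?case by (simp add: zp_add[OF assms(1)])
qed

lemma zp_pmult: "prime p \<Longrightarrow> zp p x \<Longrightarrow> zp p (of_nat p * x)"
  using zp_mult[of p "of_int (int p)" x] zp_of_int[of p "int p"] by simp

lemma congp_refl: "prime p \<Longrightarrow> congp p x x"
  unfolding congp_def by (simp add: zp_0)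

lemma congp_p0: "prime p \<Longrightarrow> zp p y \<Longrightarrow> congp p (of_nat p * y) 0"
  unfolding congp_def using prime_gt_0_nat[of p] by simp

lemma congp_0p: "prime p \<Longrightarrow> zp p y \<Longrightarrow> congp p 0 (of_nat p * y)"
  unfolding congp_def using prime_gt_0_nat[of p] by (simp add: zp_uminus)

lemma congp_pp: "prime p \<Longrightarrow> zp p x \<Longrightarrow> zp p y \<Longrightarrow> congp p (of_nat p * x) (of_nat p * y)"
  unfolding congp_def using prime_gt_0_nat[of p] 
  by (simp add: zp_diff right_diff_distrib[symmetric])

lemma congp_add: assumes "prime p" "congp p x y" "congp p x' y'" shows "congp p (x + x') (y + y')"
proof -
  have e: "x + x' - (y + y') = (x - y) + (x' - y')" by simp
  have "(x + x' - (y + y')) / of_nat p = (x - y) / of_nat p + (x' - y') / of_nat p"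
    unfolding e by (rule add_divide_distrib)
  thus ?thesis using assms zp_add unfolding congp_def by metis
qed

lemma congp_diff: assumes "prime p" "congp p x y" "congp p x' y'" shows "congp p (x - x') (y - y')"
proof -
  have e: "x - x' - (y - y') = (x - y) - (x' - y')" by simp
  have "(x - x' - (y - y')) / of_nat p = (x - y) / of_nat p - (x' - y') / of_nat p"
    unfolding e by (rule diff_divide_distrib)
  thus ?thesis using assms zp_diff unfolding congp_def by metis
qed


definition z0 :: elt where "z0 = (\<lambda>_ _ _. 0)"

lemma mmul_z0: "mmul a z0 = z0"
  unfolding mmul_def z0_def by simp

lemma mmul_madd: "mmul a (madd b c) = madd (mmul a b) (mmul a c)"
  unfolding mmul_def madd_def by (simp add: distrib_left sum.distrib)

lemma mmul_msub: "mmul a (msub b c) = msub (mmul a b) (mmul a c)"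
  unfolding mmul_def msub_def by (simp add: right_diff_distrib sum_subtractf)

lemma mmul_msc: "mmul a (msc c b) = msc c (mmul a b)"
  unfolding mmul_def msc_def by (simp add: sum_distrib_left algebra_simps)

lemma mmul_msc_left: "mmul (msc c a) b = msc c (mmul a b)"
  unfolding mmul_def msc_def by (simp add: sum_distrib_left algebra_simps)

lemma mmul_madd_left: "mmul (madd a b) c = madd (mmul a c) (mmul b c)"
  unfolding mmul_def madd_def by (simp add: distrib_right sum.distrib)

lemma msc_madd: "msc c (madd a b) = madd (msc c a) (msc c b)"
  unfolding msc_def madd_def by (simp add: algebra_simps)

lemma msc_msub: "msc c (msub a b) = msub (msc c a) (msc c b)"
  unfolding msc_def msub_def by (simp add: algebra_simps)

lemma msc_z0: "msc c z0 = z0"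
  unfolding msc_def z0_def by simp

lemma mmul_eta:
  "mmul (eta lam0 i0 j0) M lam i j =
     (if lam = lam0 \<and> i = i0 \<and> 1 \<le> j0 \<and> j0 \<le> nlam lam0 then M lam0 j0 j else 0)"
proof (cases "lam = lam0 \<and> i = i0")
  case True
  have "mmul (eta lam0 i0 j0) M lam i j = (\<Sum>t = 1..nlam lam. if t = j0 then M lam t j else 0)"
    unfolding mmul_def eta_def using True by (intro sum.cong) auto
  also have "\<dots> = (if j0 \<in> {1..nlam lam} then M lam j0 j else 0)"
    by (simp add: sum.delta)
  finally show ?thesis using True by auto
next
  case False
  then show ?thesis unfolding mmul_def eta_def by auto
qed

lemma z0_Gam: "prime p \<Longrightarrow> z0 \<in> Gam p"
  unfolding Gam_def z0_def by (simp add: zp_0)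

lemma z0_Lam: "prime p \<Longrightarrow> z0 \<in> Lam p"
  unfolding Lam_def using z0_Gam by (simp add: z0_def congp_refl)

lemma Gam_zp: "rho \<in> Gam p \<Longrightarrow> zp p (rho lam i j)"
  unfolding Gam_def by blast

lemma Gam_supp: "rho \<in> Gam p \<Longrightarrow> rho lam i j \<noteq> 0 \<Longrightarrow>
   is_partition p lam \<and> i \<in> {1..nlam lam} \<and> j \<in> {1..nlam lam}"
  unfolding Gam_def by blast

lemma Lam_Gam: "rho \<in> Lam p \<Longrightarrow> rho \<in> Gam p"
  unfolding Lam_def by blast

lemma Lam_bb: "rho \<in> Lam p \<Longrightarrow> k \<in> {1..p-1} \<Longrightarrow> a \<in> {1..nb p k} \<Longrightarrow> b \<in> {1..nb p k} \<Longrightarrow>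
   congp p (rho (hook p k) (nc p k + a) (nc p k + b)) (rho (hook p (Suc k)) a b)"
  unfolding Lam_def by blast

lemma Lam_cb: "rho \<in> Lam p \<Longrightarrow> k \<in> {1..p-1} \<Longrightarrow> a \<in> {1..nc p k} \<Longrightarrow> b \<in> {1..nb p k} \<Longrightarrow>
   congp p (rho (hook p k) a (nc p k + b)) 0"
  unfolding Lam_def by blast

lemma LamI: "rho \<in> Gam p \<Longrightarrow>
  (\<And>k a b. k \<in> {1..p-1} \<Longrightarrow> a \<in> {1..nb p k} \<Longrightarrow> b \<in> {1..nb p k} \<Longrightarrow>
   congp p (rho (hook p k) (nc p k + a) (nc p k + b)) (rho (hook p (Suc k)) a b)) \<Longrightarrow>
  (\<And>k a b. k \<in> {1..p-1} \<Longrightarrow> a \<in> {1..nc p k} \<Longrightarrow> b \<in> {1..nb p k} \<Longrightarrow>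
   congp p (rho (hook p k) a (nc p k + b)) 0) \<Longrightarrow> rho \<in> Lam p"
  unfolding Lam_def by blast

lemma madd_Gam: assumes "prime p" "a \<in> Gam p" "b \<in> Gam p" shows "madd a b \<in> Gam p"
  unfolding Gam_def mem_Collect_eq
proof (rule conjI; intro allI impI)
  fix lam i j assume "madd a b lam i j \<noteq> 0"
  hence "a lam i j \<noteq> 0 \<or> b lam i j \<noteq> 0" unfolding madd_def by auto
  thus "is_partition p lam \<and> i \<in> {1..nlam lam} \<and> j \<in> {1..nlam lam}"
    using Gam_supp assms by blast
next
  fix lam i j show "zp p (madd a b lam i j)" unfolding madd_def using zp_add Gam_zp assms by blast
qed

lemma msub_Gam: assumes "prime p" "a \<in> Gam p" "b \<in> Gam p" shows "msub a b \<in> Gam p"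
  unfolding Gam_def mem_Collect_eq
proof (rule conjI; intro allI impI)
  fix lam i j assume "msub a b lam i j \<noteq> 0"
  hence "a lam i j \<noteq> 0 \<or> b lam i j \<noteq> 0" unfolding msub_def by auto
  thus "is_partition p lam \<and> i \<in> {1..nlam lam} \<and> j \<in> {1..nlam lam}"
    using Gam_supp assms by blast
next
  fix lam i j show "zp p (msub a b lam i j)" unfolding msub_def using zp_diff Gam_zp assms by blast
qed

lemma mscp_Gam: "prime p \<Longrightarrow> a \<in> Gam p \<Longrightarrow> msc (of_nat p) a \<in> Gam p"
  unfolding Gam_def msc_def by (auto intro: zp_pmult)

lemma madd_Lam: assumes "prime p" "a \<in> Lam p" "b \<in> Lam p" shows "madd a b \<in> Lam p"
proof (rule LamI)
  show "madd a b \<in> Gam p" using assms madd_Gam Lam_Gam by blast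
next
  fix k x y assume h: "k \<in> {1..p-1}" "x \<in> {1..nb p k}" "y \<in> {1..nb p k}"
  show "congp p (madd a b (hook p k) (nc p k + x) (nc p k + y)) (madd a b (hook p (Suc k)) x y)"
    unfolding madd_def using congp_add[OF assms(1) Lam_bb[OF assms(2) h] Lam_bb[OF assms(3) h]] .
next
  fix k x y assume h: "k \<in> {1..p-1}" "x \<in> {1..nc p k}" "y \<in> {1..nb p k}"
  show "congp p (madd a b (hook p k) x (nc p k + y)) 0"
    unfolding madd_def using congp_add[OF assms(1) Lam_cb[OF assms(2) h] Lam_cb[OF assms(3) h]] by simp
qed

lemma msub_Lam: assumes "prime p" "a \<in> Lam p" "b \<in> Lam p" shows "msub a b \<in> Lam p"
proof (rule LamI)
  show "msub a b \<in> Gam p" using assms msub_Gam Lam_Gam by blast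
next
  fix k x y assume h: "k \<in> {1..p-1}" "x \<in> {1..nb p k}" "y \<in> {1..nb p k}"
  show "congp p (msub a b (hook p k) (nc p k + x) (nc p k + y)) (msub a b (hook p (Suc k)) x y)"
    unfolding msub_def using congp_diff[OF assms(1) Lam_bb[OF assms(2) h] Lam_bb[OF assms(3) h]] .
next
  fix k x y assume h: "k \<in> {1..p-1}" "x \<in> {1..nc p k}" "y \<in> {1..nb p k}"
  show "congp p (msub a b (hook p k) x (nc p k + y)) 0"
    unfolding msub_def using congp_diff[OF assms(1) Lam_cb[OF assms(2) h] Lam_cb[OF assms(3) h]] by simp
qed

lemma mscp_Lam: assumes "prime p" "a \<in> Lam p" shows "msc (of_nat p) a \<in> Lam p"
proof (rule LamI)
  have G: "a \<in> Gam p" using assms Lam_Gam by blast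
  show "msc (of_nat p) a \<in> Gam p" using assms mscp_Gam G by blast
  fix k x y
  show "congp p (msc (of_nat p) a (hook p k) (nc p k + x) (nc p k + y)) (msc (of_nat p) a (hook p (Suc k)) x y)"
    unfolding msc_def using congp_pp[OF assms(1) Gam_zp[OF G] Gam_zp[OF G]] .
  show "congp p (msc (of_nat p) a (hook p k) x (nc p k + y)) 0"
    unfolding msc_def using congp_p0[OF assms(1) Gam_zp[OF G]] .
qed

lemma eL_memI: "rho \<in> Lam p \<Longrightarrow> mmul (etl p k) rho \<in> eL p k"
  unfolding eL_def by blast

lemma eL_memE: "x \<in> eL p k \<Longrightarrow> (\<And>rho. rho \<in> Lam p \<Longrightarrow> x = mmul (etl p k) rho \<Longrightarrow> P) \<Longrightarrow> P"
  unfolding eL_def by blast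

lemma pEL_memI: "x \<in> eL p k \<Longrightarrow> msc (of_nat p) x \<in> pEL p k"
  unfolding pEL_def by blast

lemma pEL_memE: "x \<in> pEL p k \<Longrightarrow> (\<And>y. y \<in> eL p k \<Longrightarrow> x = msc (of_nat p) y \<Longrightarrow> P) \<Longrightarrow> P"
  unfolding pEL_def by blast

lemma z0_eL: "prime p \<Longrightarrow> z0 \<in> eL p k"
  using eL_memI[OF z0_Lam, of p k] by (simp add: mmul_z0)

lemma eL_madd: "prime p \<Longrightarrow> x \<in> eL p k \<Longrightarrow> y \<in> eL p k \<Longrightarrow> madd x y \<in> eL p k"
  by (metis eL_memE eL_memI madd_Lam mmul_madd)

lemma eL_msub: "prime p \<Longrightarrow> x \<in> eL p k \<Longrightarrow> y \<in> eL p k \<Longrightarrow> msub x y \<in> eL p k"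
  by (metis eL_memE eL_memI msub_Lam mmul_msub)

lemma z0_pEL: "prime p \<Longrightarrow> z0 \<in> pEL p k"
  using pEL_memI[OF z0_eL, of p k] by (simp add: msc_z0)

lemma pEL_madd: "prime p \<Longrightarrow> x \<in> pEL p k \<Longrightarrow> y \<in> pEL p k \<Longrightarrow> madd x y \<in> pEL p k"
  by (metis pEL_memE pEL_memI eL_madd msc_madd)

lemma pEL_msub: "prime p \<Longrightarrow> x \<in> pEL p k \<Longrightarrow> y \<in> pEL p k \<Longrightarrow> msub x y \<in> pEL p k"
  by (metis pEL_memE pEL_memI eL_msub msc_msub)

lemma pEL_eL: "prime p \<Longrightarrow> x \<in> pEL p k \<Longrightarrow> x \<in> eL p k"
  by (metis pEL_memE eL_memE eL_memI mscp_Lam mmul_msc)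

lemma zeroc_eq: "prime p \<Longrightarrow> zeroc p k = pEL p k"
  unfolding zeroc_def using pEL_eL by blast

section \<open>Cosets\<close>

lemma Pmod_repr:
  assumes "X \<in> Pmod p k"
  obtains x0 where "x0 \<in> eL p k" "X = {y. y \<in> eL p k \<and> msub x0 y \<in> pEL p k}"
  using assms unfolding Pmod_def quotient_def by auto

lemma elt_id1: "msub x0 z = msub (msub x0 x) (madd (msub z (madd x y)) y)"
  unfolding msub_def madd_def by (intro ext) simp

lemma elt_id2: "msub x0 z = msub (msub x0 y) (madd (msub z (madd x y)) x)"
  unfolding msub_def madd_def by (intro ext) simp

lemma elt_id3: "z = madd (msub z (madd x y)) (madd x y)"
  unfolding msub_def madd_def by (intro ext) simp

lemma elt_id4: "msub z (madd z z0) = z0" "msub z (madd z0 z) = z0"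
  unfolding msub_def madd_def z0_def by (intro ext, simp)+

lemma elt_id5: "a = msub y (msub y a)" "y = madd (msub y a) a" "msub y z0 = y"
  unfolding msub_def madd_def z0_def by (intro ext, simp)+

lemma addc_X_Z:
  assumes "prime p" "X \<in> Pmod p k" shows "addc p k X (zeroc p k) = X"
proof -
  obtain x0 where x0: "x0 \<in> eL p k" "X = {y. y \<in> eL p k \<and> msub x0 y \<in> pEL p k}"
    using Pmod_repr[OF assms(2)] by blast
  show ?thesis
  proof (intro equalityI subsetI)
    fix z assume "z \<in> addc p k X (zeroc p k)"
    then obtain x y where h: "z \<in> eL p k" "x \<in> X" "y \<in> pEL p k" "msub z (madd x y) \<in> pEL p k"
      unfolding addc_def zeroc_eq[OF assms(1)] by blast
    have a1: "msub x0 x \<in> pEL p k" using h x0 by blast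
    have a2: "madd (msub z (madd x y)) y \<in> pEL p k" using h pEL_madd[OF assms(1)] by blast
    have "msub x0 z \<in> pEL p k"
      unfolding elt_id1[of x0 z x y] using pEL_msub[OF assms(1) a1 a2] .
    thus "z \<in> X" using h x0 by blast
  next
    fix z assume z: "z \<in> X"
    hence "z \<in> eL p k" using x0 by blast
    moreover have "msub z (madd z z0) \<in> pEL p k" using elt_id4(1)[of z] z0_pEL[OF assms(1)] by simp
    ultimately show "z \<in> addc p k X (zeroc p k)" unfolding addc_def zeroc_eq[OF assms(1)]
      using z z0_pEL[OF assms(1)] by blast
  qed
qed

lemma addc_Z_X:
  assumes "prime p" "X \<in> Pmod p k" shows "addc p k (zeroc p k) X = X"
proof -
  obtain x0 where x0: "x0 \<in> eL p k" "X = {y. y \<in> eL p k \<and> msub x0 y \<in> pEL p k}"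
    using Pmod_repr[OF assms(2)] by blast
  show ?thesis
  proof (intro equalityI subsetI)
    fix z assume "z \<in> addc p k (zeroc p k) X"
    then obtain x y where h: "z \<in> eL p k" "x \<in> pEL p k" "y \<in> X" "msub z (madd x y) \<in> pEL p k"
      unfolding addc_def zeroc_eq[OF assms(1)] by blast
    have a1: "msub x0 y \<in> pEL p k" using h x0 by blast
    have a2: "madd (msub z (madd x y)) x \<in> pEL p k" using h pEL_madd[OF assms(1)] by blast
    have "msub x0 z \<in> pEL p k"
      unfolding elt_id2[of x0 z y x] using pEL_msub[OF assms(1) a1 a2] .
    thus "z \<in> X" using h x0 by blast
  next
    fix z assume z: "z \<in> X"
    hence "z \<in> eL p k" using x0 by blast
    moreover have "msub z (madd z0 z) \<in> pEL p k" using elt_id4(2)[of z] z0_pEL[OF assms(1)] by simp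
    ultimately show "z \<in> addc p k (zeroc p k) X" unfolding addc_def zeroc_eq[OF assms(1)]
      using z z0_pEL[OF assms(1)] by blast
  qed
qed

lemma addc_Z_Z:
  assumes "prime p" shows "addc p k (zeroc p k) (zeroc p k) = zeroc p k"
proof (intro equalityI subsetI)
  fix z assume "z \<in> addc p k (zeroc p k) (zeroc p k)"
  then obtain x y where h: "z \<in> eL p k" "x \<in> pEL p k" "y \<in> pEL p k" "msub z (madd x y) \<in> pEL p k"
    unfolding addc_def zeroc_eq[OF assms(1)] by blast
  have "z \<in> pEL p k"
    using elt_id3[of z x y] h assms(1) pEL_madd by metis
  thus "z \<in> zeroc p k" using zeroc_eq[OF assms(1)] by blast
next
  fix z assume z: "z \<in> zeroc p k"
  hence "z \<in> eL p k" unfolding zeroc_def by blast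
  thus "z \<in> addc p k (zeroc p k) (zeroc p k)" unfolding addc_def
    using z z0_pEL[OF assms(1)] z0_eL[OF assms(1)] elt_id4 zeroc_def by fastforce
qed

lemma ind_zero:
  assumes "prime p"
    and A: "\<And>x. x \<in> pEL p k1 \<Longrightarrow> mmul a x \<in> eL p k' \<Longrightarrow> mmul a x \<in> pEL p k'"
  shows "ind p k' a (zeroc p k1) = zeroc p k'"
proof (intro equalityI subsetI)
  fix y assume "y \<in> ind p k' a (zeroc p k1)"
  then obtain x where h: "y \<in> eL p k'" "x \<in> pEL p k1" "msub y (mmul a x) \<in> pEL p k'"
    unfolding ind_def zeroc_eq[OF assms(1)] by blast
  have "mmul a x \<in> eL p k'"
    using elt_id5(1)[of "mmul a x" y] h eL_msub[OF assms(1)] pEL_eL[OF assms(1)] by metis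
  hence ax: "mmul a x \<in> pEL p k'" using A h by blast
  have "y \<in> pEL p k'" using elt_id5(2)[of y "mmul a x"] pEL_madd[OF assms(1) h(3) ax] by simp
  thus "y \<in> zeroc p k'" using zeroc_eq[OF assms(1)] by blast
next
  fix y assume y: "y \<in> zeroc p k'"
  hence "y \<in> eL p k'" "y \<in> pEL p k'" unfolding zeroc_def by blast+
  moreover have "z0 \<in> zeroc p k1" using z0_pEL[OF assms(1)] zeroc_eq[OF assms(1)] by blast
  moreover have "msub y (mmul a z0) \<in> pEL p k'" using mmul_z0 elt_id5(3) y zeroc_def by simp
  ultimately show "y \<in> ind p k' a (zeroc p k1)" unfolding ind_def by blast
qed


section \<open>Hooks and the specific maps\<close>

lemma hook_len: "1 \<le> k \<Longrightarrow> length (hook p k) = k"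
  unfolding hook_def by simp

lemma hook_inj: "1 \<le> k \<Longrightarrow> 1 \<le> k' \<Longrightarrow> hook p k = hook p k' \<longleftrightarrow> k = k'"
  using hook_len by metis

lemma nc_Suc: "1 \<le> r \<Longrightarrow> nc p (Suc r) = nb p r"
  unfolding nc_def nb_def by (simp add: Suc_diff_le numeral_2_eq_2)

lemma nc_pos: "2 \<le> k \<Longrightarrow> k \<le> p \<Longrightarrow> 1 \<le> nc p k"
  unfolding nc_def by (simp add: Suc_le_eq)

lemma mmul_etl:
  "mmul (etl p k) rho lam i j =
    (if lam = hook p k \<and> i = nc p k + 1 \<and> nc p k + 1 \<le> nlam lam then rho lam i j else 0)
  + (if lam = hook p (Suc k) \<and> i = 1 \<and> 1 \<le> nlam lam then rho lam i j else 0)"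
proof -
  have "mmul (etl p k) rho lam i j = mmul (eta (hook p k) (nc p k + 1) (nc p k + 1)) rho lam i j
      + mmul (eta (hook p (Suc k)) 1 1) rho lam i j"
    unfolding etl_def by (simp only: mmul_madd_left, simp add: madd_def)
  also have "\<dots> = (if lam = hook p k \<and> i = nc p k + 1 \<and> nc p k + 1 \<le> nlam lam then rho lam i j else 0)
  + (if lam = hook p (Suc k) \<and> i = 1 \<and> 1 \<le> nlam lam then rho lam i j else 0)"
    unfolding mmul_eta by (intro arg_cong2[where f="(+)"]) auto
  finally show ?thesis .
qed

lemma eL_supp:
  assumes "x \<in> eL p k" "x lam i j \<noteq> 0"
  shows "is_partition p lam \<and> i \<in> {1..nlam lam} \<and> j \<in> {1..nlam lam}"
proof -
  obtain rho where r: "rho \<in> Lam p" "x = mmul (etl p k) rho" using assms(1) eL_memE by blast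
  have G: "rho \<in> Gam p" using r Lam_Gam by blast
  show ?thesis using assms(2) Gam_supp[OF G] unfolding r(2) mmul_etl
    by (auto split: if_splits)
qed

lemma etl_fix:
  assumes "1 \<le> k" "sig \<in> Gam p"
    and S: "\<And>lam i j. sig lam i j \<noteq> 0 \<Longrightarrow>
              (lam = hook p k \<and> i = nc p k + 1) \<or> (lam = hook p (Suc k) \<and> i = 1)"
  shows "mmul (etl p k) sig = sig"
proof (intro ext)
  fix lam i j
  have ne: "hook p k \<noteq> hook p (Suc k)" using hook_inj[of k "Suc k" p] assms(1) by simp
  show "mmul (etl p k) sig lam i j = sig lam i j"
  proof (cases "sig lam i j = 0")
    case True
    then show ?thesis unfolding mmul_etl using ne by auto
  next
    case False
    have "i \<in> {1..nlam lam}" using Gam_supp[OF assms(2) False] by blast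
    then show ?thesis using S[OF False] ne unfolding mmul_etl by auto
  qed
qed

lemma msc_supp:
  assumes "prime p" "msc (of_nat p) sig \<in> eL p k" "sig lam i j \<noteq> 0"
  shows "is_partition p lam \<and> i \<in> {1..nlam lam} \<and> j \<in> {1..nlam lam}"
proof -
  have "p \<noteq> 0" using assms(1) by auto
  hence "msc (of_nat p) sig lam i j \<noteq> 0" using assms(3) unfolding msc_def by simp
  thus ?thesis using eL_supp[OF assms(2)] by blast
qed

lemma up_A:
  assumes p: "prime p" and r: "1 \<le> r" "r \<le> p - 2" and x: "x \<in> pEL p r"
    and ax: "mmul (eta (hook p (Suc r)) (nc p (Suc r) + 1) 1) x \<in> eL p (Suc r)"
  shows "mmul (eta (hook p (Suc r)) (nc p (Suc r) + 1) 1) x \<in> pEL p (Suc r)"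
proof -
  define a where "a = eta (hook p (Suc r)) (nc p (Suc r) + 1) 1"
  define H where "H = hook p (Suc r)"
  define N where "N = nc p (Suc r)"
  have p2: "2 \<le> p" using p prime_ge_2_nat by blast
  obtain y where y: "y \<in> eL p r" "x = msc (of_nat p) y" using x pEL_memE by blast
  obtain rho where rho: "rho \<in> Lam p" "y = mmul (etl p r) rho" using y(1) eL_memE by blast
  have G: "rho \<in> Gam p" using rho Lam_Gam by blast
  define sig where "sig = mmul a y"
  have ax_eq: "mmul a x = msc (of_nat p) sig" unfolding sig_def y(2) mmul_msc ..
  have ne: "H \<noteq> hook p r" unfolding H_def using hook_inj[of "Suc r" r p] r by simp
  have sf: "\<And>lam i j. sig lam i j = (if lam = H \<and> i = N + 1 \<and> 1 \<le> nlam H then rho H 1 j else 0)"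
    unfolding sig_def a_def rho(2) mmul_eta mmul_etl H_def[symmetric] N_def[symmetric]
    using ne by auto
  have szp: "\<And>lam i j. zp p (sig lam i j)" using sf Gam_zp[OF G] zp_0[OF p] by simp
  have sG: "sig \<in> Gam p" unfolding Gam_def
    using msc_supp[OF p ax[folded a_def, unfolded ax_eq]] szp by blast
  have Npos: "1 \<le> N" unfolding N_def using nc_pos[of "Suc r" p] r p2 by simp
  have NB: "nb p r = N" unfolding N_def using nc_Suc[OF r(1)] by simp
  have sL: "sig \<in> Lam p"
  proof (rule LamI[OF sG])
    fix k aa bb assume h: "k \<in> {1..p-1}" "aa \<in> {1..nb p k}" "bb \<in> {1..nb p k}"
    have R0: "sig (hook p (Suc k)) aa bb = 0"
    proof -
      have "\<not> (hook p (Suc k) = H \<and> aa = N + 1)"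
      proof
        assume "hook p (Suc k) = H \<and> aa = N + 1"
        hence "k = r" "aa = N + 1" unfolding H_def using hook_inj[of "Suc k" "Suc r" p] by auto
        thus False using h NB by auto
      qed
      thus ?thesis by (auto simp: sf)
    qed
    show "congp p (sig (hook p k) (nc p k + aa) (nc p k + bb)) (sig (hook p (Suc k)) aa bb)"
    proof (cases "k = Suc r \<and> aa = 1")
      case True
      have c: "congp p (rho H 1 (N + bb)) 0"
        unfolding H_def N_def using Lam_cb[OF rho(1), of "Suc r" 1 bb] True h Npos r p2
        unfolding N_def by auto
      show ?thesis unfolding R0 using True sf c congp_refl[OF p] 
        unfolding H_def[symmetric] N_def[symmetric] by auto
    next
      case False
      have "sig (hook p k) (nc p k + aa) (nc p k + bb) = 0"
      proof -
        have "\<not> (hook p k = H \<and> nc p k + aa = N + 1)"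
        proof
          assume "hook p k = H \<and> nc p k + aa = N + 1"
          hence "k = Suc r" "nc p k + aa = N + 1" unfolding H_def using hook_inj[of k "Suc r" p] h by auto
          thus False using False N_def by auto
        qed
        thus ?thesis by (auto simp: sf)
      qed
      thus ?thesis unfolding R0 using congp_refl[OF p] by simp
    qed
  next
    fix k aa bb assume h: "k \<in> {1..p-1}" "aa \<in> {1..nc p k}" "bb \<in> {1..nb p k}"
    have "\<not> (hook p k = H \<and> aa = N + 1)"
    proof
      assume "hook p k = H \<and> aa = N + 1"
      hence "k = Suc r" "aa = N + 1" unfolding H_def using hook_inj[of k "Suc r" p] h by auto
      thus False using h N_def by auto
    qed
    hence "sig (hook p k) aa (nc p k + bb) = 0" by (auto simp: sf)
    thus "congp p (sig (hook p k) aa (nc p k + bb)) 0" using congp_refl[OF p] by simp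
  qed
  have "mmul (etl p (Suc r)) sig = sig"
    by (rule etl_fix[OF _ sG]) (use sf H_def N_def in \<open>auto split: if_splits\<close>)
  hence "sig \<in> eL p (Suc r)" using sL by (metis eL_memI)
  thus ?thesis unfolding a_def[symmetric] ax_eq by (rule pEL_memI)
qed

lemma down_A:
  assumes p: "prime p" and k: "1 \<le> k" "k \<le> p - 2" and x: "x \<in> pEL p (Suc k)"
    and ax: "mmul (msc (of_nat p) (eta (hook p (Suc k)) 1 (nc p (Suc k) + 1))) x \<in> eL p k"
  shows "mmul (msc (of_nat p) (eta (hook p (Suc k)) 1 (nc p (Suc k) + 1))) x \<in> pEL p k"
proof -
  define a where "a = msc (of_nat p) (eta (hook p (Suc k)) 1 (nc p (Suc k) + 1))"
  define H where "H = hook p (Suc k)"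
  define N where "N = nc p (Suc k)"
  have p2: "2 \<le> p" using p prime_ge_2_nat by blast
  obtain y where y: "y \<in> eL p (Suc k)" "x = msc (of_nat p) y" using x pEL_memE by blast
  obtain rho where rho: "rho \<in> Lam p" "y = mmul (etl p (Suc k)) rho" using y(1) eL_memE by blast
  have G: "rho \<in> Gam p" using rho Lam_Gam by blast
  define sig where "sig = mmul a y"
  have ax_eq: "mmul a x = msc (of_nat p) sig" unfolding sig_def y(2) mmul_msc ..
  have ne: "H \<noteq> hook p (Suc (Suc k))" unfolding H_def using hook_inj[of "Suc k" "Suc (Suc k)" p] by simp
  have sf: "\<And>lam i j. sig lam i j =
      (if lam = H \<and> i = 1 \<and> N + 1 \<le> nlam H then of_nat p * rho H (N + 1) j else 0)"
    unfolding sig_def a_def rho(2) mmul_msc_left unfolding msc_def mmul_eta mmul_etl H_def[symmetric] N_def[symmetric]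
    using ne by auto
  have sp: "\<And>lam i j. \<exists>z. zp p z \<and> sig lam i j = of_nat p * z"
    using sf Gam_zp[OF G] zp_0[OF p] by (metis mult_zero_right)
  have szp: "\<And>lam i j. zp p (sig lam i j)" using sp zp_pmult[OF p] by metis
  have sG: "sig \<in> Gam p" unfolding Gam_def
    using msc_supp[OF p ax[folded a_def, unfolded ax_eq]] szp by blast
  have Npos: "1 \<le> N" unfolding N_def using nc_pos[of "Suc k" p] k p2 by simp
  have sL: "sig \<in> Lam p"
  proof (rule LamI[OF sG])
    fix k' aa bb assume h: "k' \<in> {1..p-1}" "aa \<in> {1..nb p k'}" "bb \<in> {1..nb p k'}"
    have L0: "sig (hook p k') (nc p k' + aa) (nc p k' + bb) = 0"
    proof -
      have "\<not> (hook p k' = H \<and> nc p k' + aa = 1)"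
      proof
        assume "hook p k' = H \<and> nc p k' + aa = 1"
        hence "k' = Suc k" "nc p k' + aa = 1" unfolding H_def using hook_inj[of k' "Suc k" p] h by auto
        thus False using h Npos N_def by auto
      qed
      thus ?thesis by (auto simp: sf)
    qed
    obtain z where z: "zp p z" "sig (hook p (Suc k')) aa bb = of_nat p * z" using sp by blast
    show "congp p (sig (hook p k') (nc p k' + aa) (nc p k' + bb)) (sig (hook p (Suc k')) aa bb)"
      unfolding L0 z(2) using congp_0p[OF p z(1)] .
  next
    fix k' aa bb
    obtain z where z: "zp p z" "sig (hook p k') aa (nc p k' + bb) = of_nat p * z" using sp by blast
    show "congp p (sig (hook p k') aa (nc p k' + bb)) 0"
      unfolding z(2) using congp_p0[OF p z(1)] .
  qed
  have "mmul (etl p k) sig = sig"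
    by (rule etl_fix[OF k(1) sG]) (use sf H_def in \<open>auto split: if_splits\<close>)
  hence "sig \<in> eL p k" using sL by (metis eL_memI)
  thus ?thesis unfolding a_def[symmetric] ax_eq by (rule pEL_memI)
qed

lemma up_zero:
  assumes "prime p" "1 \<le> r" "r \<le> p - 2"
  shows "e_up p r (zeroc p r) = zeroc p (Suc r)"
  unfolding e_up_def by (rule ind_zero[OF assms(1)]) (rule up_A[OF assms])

lemma down_zero:
  assumes "prime p" "1 \<le> k" "k \<le> p - 2"
  shows "e_down p k (zeroc p (Suc k)) = zeroc p k"
  unfolding e_down_def by (rule ind_zero[OF assms(1)]) (rule down_A[OF assms])


section \<open>Combinatorics of the resolution\<close>

lemma iota_pow_id: "iota_pow p n = (\<lambda>i. id)"
  by (induction n) (simp_all add: gcomp_def iota_def)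

lemma foldr_gadd:
  "(foldr (\<lambda>k acc. gadd p (h k) acc) xs g) j X
     = foldr (\<lambda>k A. addc p (omega p j) (h k j X) A) xs (g j X)"
  by (induction xs) (simp_all add: gadd_def)

lemma foldr_Z:
  assumes "prime p" "\<And>k. k \<in> set xs \<Longrightarrow> F k = zeroc p k0"
  shows "foldr (\<lambda>k A. addc p k0 (F k) A) xs (zeroc p k0) = zeroc p k0"
  using assms(2) by (induction xs) (simp_all add: addc_Z_Z[OF assms(1)])

lemma foldr_X:
  assumes "prime p" "X \<in> Pmod p k0" "distinct xs" "ks \<in> set xs" "F ks = X"
    "\<And>k. k \<in> set xs \<Longrightarrow> k \<noteq> ks \<Longrightarrow> F k = zeroc p k0"
  shows "foldr (\<lambda>k A. addc p k0 (F k) A) xs (zeroc p k0) = X"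
  using assms(3-6)
proof (induction xs)
  case Nil then show ?case by simp
next
  case (Cons a xs)
  show ?case
  proof (cases "a = ks")
    case True
    hence "ks \<notin> set xs" using Cons.prems(1) by simp
    hence "\<And>k. k \<in> set xs \<Longrightarrow> F k = zeroc p k0" using Cons.prems(4) by force
    hence "foldr (\<lambda>k A. addc p k0 (F k) A) xs (zeroc p k0) = zeroc p k0"
      using foldr_Z[OF assms(1)] by blast
    then show ?thesis using True Cons.prems(3) addc_X_Z[OF assms(1,2)] by simp
  next
    case False
    hence "foldr (\<lambda>k A. addc p k0 (F k) A) xs (zeroc p k0) = X"
      using Cons by auto
    moreover have "F a = zeroc p k0" using Cons.prems(4) False by simp
    ultimately show ?thesis using addc_Z_X[OF assms(1,2)] by simp
  qed
qed

lemma exmod: "(c::nat) < l \<Longrightarrow> (\<exists>i. j = c + l * i) \<longleftrightarrow> j mod l = c"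
proof
  assume "c < l" "\<exists>i. j = c + l * i"
  then show "j mod l = c" by auto
next
  assume "c < l" "j mod l = c"
  hence "j = c + l * (j div l)" by (metis add.commute div_mult_mod_eq mult.commute)
  thus "\<exists>i. j = c + l * i" by blast
qed

lemma gamma_eval:
  assumes "1 \<le> k" "k \<le> p - 1" "2 \<le> p"
  shows "gamma p k j = (if j mod ll p = k - 1 \<or> j mod ll p = k - 1 + (p - 1) then id
                        else (\<lambda>X. zeroc p (omega p j)))"
proof -
  have "k - 1 < ll p" "k - 1 + (p - 1) < ll p" using assms unfolding ll_def by auto
  thus ?thesis unfolding gamma_def using exmod by (metis (no_types, lifting))
qed

lemma omega_eq: "omega p i = (if i mod ll p \<le> p - 2 then i mod ll p + 1 else ll p - i mod ll p)"
  by (simp add: omega_def Let_def)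

lemma chi_eq: "chi p j = (if j mod ll p = 0 then id
     else if j mod ll p \<le> p - 2 then e_up p (j mod ll p)
     else if j mod ll p = p - 1 then id
     else e_down p (p - (j mod ll p - (p - 1)) - 1))"
  by (simp add: chi_def Let_def)

lemma deg_gamma_eq:
  assumes "1 \<le> k" "k \<le> p - 1"
  shows "deg_gamma p k = (k - 1) * ll p + (ll p + 1 - 2 * k)"
proof -
  obtain k' where k: "k = Suc k'" using assms by (cases k) auto
  define L where "L = ll p - 1"
  have l: "ll p = Suc L" "L = 2 * p - 3" using assms unfolding L_def ll_def by auto
  have "2 * k' \<le> L" using assms k l by auto
  have "deg_gamma p k = (L + k' * L) - k'" unfolding deg_gamma_def k L_def by simp
  moreover have "(k - 1) * ll p + (ll p + 1 - 2 * k) = k' * L + k' + (Suc L + 1 - 2 * Suc k')"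
    unfolding k l(1) by simp
  moreover have "k' * L \<ge> 0" by simp
  ultimately show ?thesis using \<open>2 * k' \<le> L\<close> by simp
qed

lemma mod_shift:
  assumes "0 < (l::nat)"
  shows "(j + ((k - 1) * l + c)) mod l = (j mod l + c) mod l"
proof -
  have e: "j + ((k - 1) * l + c) = (j + c) + l * (k - 1)" by (simp add: algebra_simps)
  have "(j + ((k - 1) * l + c)) mod l = (j + c) mod l" unfolding e by (rule mod_mult_self2)
  also have "\<dots> = (j mod l + c) mod l" by (simp add: mod_add_left_eq)
  finally show ?thesis .
qed

lemma mod_small: "(a::nat) < 2 * l \<Longrightarrow> a mod l = (if a < l then a else a - l)"
  by (simp add: le_mod_geq)


lemma T1_eq:
  assumes p: "prime p" "3 \<le> p"
  shows "chi p j (gamma p (p - 1) (j + deg_chi p) X) =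
    (if j mod ll p = 0 \<or> j mod ll p = p - 1 then X else zeroc p (omega p j))"
proof -
  define l where "l = ll p"
  define r where "r = j mod l"
  have l: "l = 2 * p - 2" "0 < l" unfolding l_def ll_def using p by auto
  have rl: "r < l" unfolding r_def using l by simp
  have jr: "j mod ll p = r" unfolding r_def l_def ..
  have res: "(j + deg_chi p) mod l = (if r = 0 then l - 1 else r - 1)"
  proof -
    have "(j + deg_chi p) mod l = (r + (l - 1)) mod l"
      unfolding deg_chi_def l_def[symmetric] r_def by (simp add: mod_add_left_eq)
    also have "\<dots> = (if r = 0 then l - 1 else r - 1)"
      using mod_small[of "r + (l - 1)" l] rl l by auto
    finally show ?thesis .
  qed
  have g: "gamma p (p - 1) (j + deg_chi p) =
      (if (j + deg_chi p) mod l = p - 2 \<or> (j + deg_chi p) mod l = p - 2 + (p - 1) then id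
       else (\<lambda>X. zeroc p (omega p (j + deg_chi p))))"
    using gamma_eval[of "p - 1" p "j + deg_chi p"] p unfolding l_def by auto
  have om: "omega p (j + deg_chi p) = (if (j + deg_chi p) mod l \<le> p - 2 then (j + deg_chi p) mod l + 1
      else l - (j + deg_chi p) mod l)" using omega_eq unfolding l_def by blast
  have omj: "omega p j = (if r \<le> p - 2 then r + 1 else l - r)"
    using omega_eq unfolding l_def r_def by blast
  have ch: "chi p j = (if r = 0 then id else if r \<le> p - 2 then e_up p r
     else if r = p - 1 then id else e_down p (p - (r - (p - 1)) - 1))"
    using chi_eq unfolding l_def r_def by blast
  show ?thesis
  proof (cases "r = 0 \<or> r = p - 1")
    case True
    have rs: "(if r = 0 then l - 1 else r - 1) = p - 2 \<or> (if r = 0 then l - 1 else r - 1) = p - 2 + (p - 1)"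
      using True l p by auto
    have gid: "gamma p (p - 1) (j + deg_chi p) = id" unfolding g res by (rule if_P[OF rs])
    have "\<not> (p - 1 \<le> p - 2)" using p by arith
    hence cid: "chi p j = id" unfolding ch using True by auto
    show ?thesis unfolding gid cid jr using True by simp
  next
    case False
    hence inner: "gamma p (p - 1) (j + deg_chi p) X = zeroc p (omega p (j + deg_chi p))"
      unfolding g res using l p rl by auto
    show ?thesis
    proof (cases "r \<le> p - 2")
      case True
      have o2: "omega p (j + deg_chi p) = r" unfolding om res using True False by auto
      have uz: "e_up p r (zeroc p r) = zeroc p (Suc r)" using up_zero[OF p(1)] True False by auto
      have c1: "chi p j = e_up p r" unfolding ch using True False by auto
      have o1: "omega p j = Suc r" unfolding omj using True by auto
      show ?thesis unfolding inner c1 o1 o2 jr uz using False by simp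
    next
      case F2: False
      define k where "k = p - (r - (p - 1)) - 1"
      have k: "1 \<le> k" "k \<le> p - 2" "l - (r - 1) = Suc k" "l - r = k"
        unfolding k_def using F2 False rl l by auto
      have o2: "omega p (j + deg_chi p) = Suc k" unfolding om res using F2 False k by auto
      have dz: "e_down p k (zeroc p (Suc k)) = zeroc p k" using down_zero[OF p(1) k(1,2)] .
      have c1: "chi p j = e_down p k" unfolding ch k_def using F2 False by auto
      have o1: "omega p j = k" unfolding omj using F2 k(4) by auto
      show ?thesis unfolding inner c1 o1 o2 jr dz using False by simp
    qed
  qed
qed

lemma T2_eq:
  assumes p: "prime p" "3 \<le> p"
  shows "gamma p (p - 1) j (chi p (j + deg_gamma p (p - 1)) X) =
    (if j mod ll p = p - 2 \<or> j mod ll p = 2 * p - 3 then X else zeroc p (omega p j))"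
proof -
  define l where "l = ll p"
  define r where "r = j mod l"
  have l: "l = 2 * p - 2" "0 < l" unfolding l_def ll_def using p by auto
  have rl: "r < l" unfolding r_def using l by simp
  have jr: "j mod ll p = r" unfolding r_def l_def ..
  have deg: "deg_gamma p (p - 1) = (p - 1 - 1) * l + 1"
    using deg_gamma_eq[of "p - 1" p] p unfolding l_def[symmetric] using l by auto
  have res: "(j + deg_gamma p (p - 1)) mod l = (r + 1) mod l"
    unfolding deg r_def using mod_shift[OF l(2), of j "p - 1" 1] by simp
  have g: "gamma p (p - 1) j = (if r = p - 2 \<or> r = p - 2 + (p - 1) then id
       else (\<lambda>X. zeroc p (omega p j)))"
    using gamma_eval[of "p - 1" p j] p unfolding l_def r_def by auto
  have ch: "chi p (j + deg_gamma p (p - 1)) = (if (r + 1) mod l = 0 then id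
     else if (r + 1) mod l \<le> p - 2 then e_up p ((r + 1) mod l)
     else if (r + 1) mod l = p - 1 then id else e_down p (p - ((r + 1) mod l - (p - 1)) - 1))"
    using chi_eq[of p "j + deg_gamma p (p - 1)"] unfolding l_def[symmetric] res .
  show ?thesis
  proof (cases "r = p - 2 \<or> r = 2 * p - 3")
    case True
    have "(r + 1) mod l = 0 \<or> (r + 1) mod l = p - 1"
    proof (cases "r = p - 2")
      case True
      hence "r + 1 < l" using l p by auto
      thus ?thesis using True p by auto
    next
      case False
      hence "r + 1 = l" using \<open>r = p - 2 \<or> r = 2 * p - 3\<close> l p by auto
      thus ?thesis by simp
    qed
    moreover have "r = p - 2 \<or> r = p - 2 + (p - 1)" using True p by auto
    ultimately show ?thesis unfolding g ch jr using True p by auto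
  next
    case False
    moreover have "\<not> (r = p - 2 \<or> r = p - 2 + (p - 1))" using False p by auto
    ultimately show ?thesis unfolding g jr by auto
  qed
qed

lemma G_eq:
  assumes p: "prime p" "3 \<le> p" and k: "2 \<le> k" "k \<le> p - 2"
  shows "gamma p k j (gamma p (p - k) (j + deg_gamma p k) X) =
    (if j mod ll p = k - 1 \<or> j mod ll p = k + p - 2 then X else zeroc p (omega p j))"
proof -
  define l where "l = ll p"
  define r where "r = j mod l"
  have l: "l = 2 * p - 2" "0 < l" unfolding l_def ll_def using p by auto
  have rl: "r < l" unfolding r_def using l by simp
  have jr: "j mod ll p = r" unfolding r_def l_def ..
  have deg: "deg_gamma p k = (k - 1) * l + (l + 1 - 2 * k)"
    using deg_gamma_eq[of k p] p k unfolding l_def by auto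
  have res: "(j + deg_gamma p k) mod l = (r + (l + 1 - 2 * k)) mod l"
    unfolding deg r_def using mod_shift[OF l(2)] by simp
  have g: "gamma p k j = (if r = k - 1 \<or> r = k - 1 + (p - 1) then id
       else (\<lambda>X. zeroc p (omega p j)))"
    using gamma_eval[of k p j] p k unfolding l_def r_def by auto
  have g2: "gamma p (p - k) (j + deg_gamma p k) =
     (if (r + (l + 1 - 2 * k)) mod l = p - k - 1 \<or> (r + (l + 1 - 2 * k)) mod l = p - k - 1 + (p - 1)
      then id else (\<lambda>X. zeroc p (omega p (j + deg_gamma p k))))"
    using gamma_eval[of "p - k" p "j + deg_gamma p k"] p k unfolding l_def[symmetric] res by auto
  show ?thesis
  proof (cases "r = k - 1 \<or> r = k - 1 + (p - 1)")
    case True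
    have "(r + (l + 1 - 2 * k)) mod l = p - k - 1 \<or> (r + (l + 1 - 2 * k)) mod l = p - k - 1 + (p - 1)"
    proof (cases "r = k - 1")
      case True
      hence "r + (l + 1 - 2 * k) < l" using l k by auto
      thus ?thesis using True l k by auto
    next
      case False
      hence r2: "r = k - 1 + (p - 1)" using \<open>r = k - 1 \<or> r = k - 1 + (p - 1)\<close> by blast
      have "(r + (l + 1 - 2 * k)) mod l = r + (l + 1 - 2 * k) - l"
        using mod_small[of "r + (l + 1 - 2 * k)" l] r2 l k by auto
      thus ?thesis using r2 l k by auto
    qed
    moreover have "r = k - 1 \<or> r = k + p - 2" using True k by auto
    ultimately show ?thesis unfolding g g2 jr using True by auto
  next
    case False
    moreover have "\<not> (r = k - 1 \<or> r = k + p - 2)" using False k by auto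
    ultimately show ?thesis unfolding g jr by auto
  qed
qed


theorem mainTheorem9:
  fixes p :: nat
  assumes "prime p" and "3 \<le> p"
  shows "\<forall>j. \<forall>X \<in> Pmod p (omega p (j + (p - 1) * ll p)).
    gadd p (gadd p (gcomp (chi p) (deg_chi p) (gamma p (p - 1)))
                   (gcomp (gamma p (p - 1)) (deg_gamma p (p - 1)) (chi p)))
           (foldr (\<lambda>k acc. gadd p (gcomp (gamma p k) (deg_gamma p k) (gamma p (p - k))) acc)
                  [2..<p - 1] (gzero p)) j X
    = iota_pow p (p - 1) j X"
proof (intro allI ballI)
  fix j X assume X0: "X \<in> Pmod p (omega p (j + (p - 1) * ll p))"
  note p = assms
  define k0 where "k0 = omega p j"
  define r where "r = j mod ll p"
  have l: "ll p = 2 * p - 2" unfolding ll_def by simp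
  have rl: "r < 2 * p - 2" unfolding r_def using l p by simp
  have "omega p (j + (p - 1) * ll p) = k0" unfolding k0_def omega_eq by simp
  hence X: "X \<in> Pmod p k0" using X0 by simp
  define Z where "Z = zeroc p k0"
  define T1 where "T1 = chi p j (gamma p (p - 1) (j + deg_chi p) X)"
  define T2 where "T2 = gamma p (p - 1) j (chi p (j + deg_gamma p (p - 1)) X)"
  define G where "G = (\<lambda>k. gamma p k j (gamma p (p - k) (j + deg_gamma p k) X))"
  have lhs: "gadd p (gadd p (gcomp (chi p) (deg_chi p) (gamma p (p - 1)))
                   (gcomp (gamma p (p - 1)) (deg_gamma p (p - 1)) (chi p)))
           (foldr (\<lambda>k acc. gadd p (gcomp (gamma p k) (deg_gamma p k) (gamma p (p - k))) acc)
                  [2..<p - 1] (gzero p)) j X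
    = addc p k0 (addc p k0 T1 T2) (foldr (\<lambda>k A. addc p k0 (G k) A) [2..<p - 1] Z)"
    unfolding gadd_def[of p _ "foldr _ _ _"] foldr_gadd
    by (simp add: gadd_def gcomp_def gzero_def k0_def G_def T1_def T2_def Z_def)
  have rhs: "iota_pow p (p - 1) j X = X" by (simp add: iota_pow_id)
  have T1v: "T1 = (if r = 0 \<or> r = p - 1 then X else Z)"
    unfolding T1_def T1_eq[OF p] Z_def k0_def r_def ..
  have T2v: "T2 = (if r = p - 2 \<or> r = 2 * p - 3 then X else Z)"
    unfolding T2_def T2_eq[OF p] Z_def k0_def r_def ..
  have Gv: "\<And>k. k \<in> set [2..<p - 1] \<Longrightarrow> G k = (if r = k - 1 \<or> r = k + p - 2 then X else Z)"
    unfolding G_def Z_def k0_def r_def using G_eq[OF p] by auto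
  have XX: "addc p k0 X Z = X" "addc p k0 Z X = X" "addc p k0 Z Z = Z"
    unfolding Z_def using addc_X_Z[OF p(1) X] addc_Z_X[OF p(1) X] addc_Z_Z[OF p(1)] by auto
  show "gadd p (gadd p (gcomp (chi p) (deg_chi p) (gamma p (p - 1)))
                   (gcomp (gamma p (p - 1)) (deg_gamma p (p - 1)) (chi p)))
           (foldr (\<lambda>k acc. gadd p (gcomp (gamma p k) (deg_gamma p k) (gamma p (p - k))) acc)
                  [2..<p - 1] (gzero p)) j X
    = iota_pow p (p - 1) j X"
    unfolding lhs rhs
  proof (cases "r = 0 \<or> r = p - 1")
    case True
    have "T1 = X" using T1v True by simp
    moreover have "T2 = Z" using T2v True p by auto
    moreover have "foldr (\<lambda>k A. addc p k0 (G k) A) [2..<p - 1] Z = Z"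
      unfolding Z_def by (rule foldr_Z[OF p(1)]) (use Gv True p in \<open>auto simp: Z_def\<close>)
    ultimately show "addc p k0 (addc p k0 T1 T2) (foldr (\<lambda>k A. addc p k0 (G k) A) [2..<p - 1] Z) = X"
      using XX by simp
  next
    case F1: False
    show "addc p k0 (addc p k0 T1 T2) (foldr (\<lambda>k A. addc p k0 (G k) A) [2..<p - 1] Z) = X"
    proof (cases "r = p - 2 \<or> r = 2 * p - 3")
      case True
      have "T1 = Z" using T1v F1 by simp
      moreover have "T2 = X" using T2v True by simp
      moreover have "foldr (\<lambda>k A. addc p k0 (G k) A) [2..<p - 1] Z = Z"
        unfolding Z_def by (rule foldr_Z[OF p(1)]) (use Gv True p in \<open>auto simp: Z_def\<close>)
      ultimately show ?thesis using XX by simp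
    next
      case F2: False
      define ks where "ks = (if r < p then r + 1 else r + 2 - p)"
      have ks: "ks \<in> set [2..<p - 1]" unfolding ks_def using F1 F2 rl p by auto
      have "T1 = Z" using T1v F1 by simp
      moreover have "T2 = Z" using T2v F2 by simp
      moreover have "foldr (\<lambda>k A. addc p k0 (G k) A) [2..<p - 1] Z = X"
        unfolding Z_def
      proof (rule foldr_X[OF p(1) X _ ks])
        show "distinct [2..<p - 1]" by simp
        show "G ks = X" using Gv[OF ks] unfolding ks_def using F1 F2 rl p by auto
        fix k assume k: "k \<in> set [2..<p - 1]" "k \<noteq> ks"
        have kr: "2 \<le> k" "k < p - 1" using k(1) by auto
        have "\<not> (r = k - 1 \<or> r = k + p - 2)"
        proof
          assume "r = k - 1 \<or> r = k + p - 2"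
          thus False using k(2) kr unfolding ks_def by (auto split: if_splits)
        qed
        thus "G k = zeroc p k0" using Gv[OF k(1)] unfolding Z_def by simp
      qed
      ultimately show ?thesis using XX by simp
    qed
  qed
qed

end
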